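(* Let $G$ be an undirected, weighted, connected graph on vertices $1,\dots,n$, and let $H$ be either its adjacency matrix or its Laplacian matrix. For real $t$ let $p(t)=|\langle s|e^{itH}|r\rangle|^2$ be the fidelity of state transfer from a sender vertex $s$ to a receiver vertex $r$. Suppose there is perfect state transfer from $s$ to $r$ at time $t_0$, i.e. $p(t_0)=1$. Let $\lambda_1$ and $\lambda_n$ denote the smallest and largest eigenvalues of $H$, and let $h\in\mathbb{R}$ satisfy $|h|<\frac{\pi}{\lambda_n-\lambda_1}$. Then \[ p(t_0+h)\ \ge\ \frac14\left|e^{ih\lambda_1}+e^{ih\lambda_n}\right|^2 . \]
   Context: For a weighted graph with edge weights $w(j,k)$, the adjacency matrix $A=[a_{jk}]$ has $a_{jk}=w(j,k)$ if $j,k$ are adjacent and $a_{jk}=0$ otherwise; the Laplacian is $L=R-A$ where $R$ is the diagonal matrix of row sums of $A$. $\{|1\rangle,\dots,|n\rangle\}$ is the standard basis of $\mathbb{C}^n$, so $\langle s|e^{itH}|r\rangle$ is the $(s,r)$ entry of $e^{itH}$. *)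

theory Defs
  imports "HOL-Analysis.Analysis"
begin

text \<open>Weighted graph on the finite vertex type 'n: symmetric irreflexive edge relation E,
  symmetric weight function w.\<close>

definition adj_mat :: "('n::finite \<Rightarrow> 'n \<Rightarrow> bool) \<Rightarrow> ('n \<Rightarrow> 'n \<Rightarrow> real) \<Rightarrow> real^'n^'n" where
  "adj_mat E w = (\<chi> j k. if E j k then w j k else 0)"

definition lap_mat :: "('n::finite \<Rightarrow> 'n \<Rightarrow> bool) \<Rightarrow> ('n \<Rightarrow> 'n \<Rightarrow> real) \<Rightarrow> real^'n^'n" where
  "lap_mat E w = (\<chi> j k. if j = k then (\<Sum>l\<in>UNIV. adj_mat E w $ j $ l) else 0) - adj_mat E w"

primrec cmat_pow :: "complex^'n^'n \<Rightarrow> nat \<Rightarrow> complex^'n^'n" where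
  "cmat_pow A 0 = mat 1"
| "cmat_pow A (Suc k) = A ** cmat_pow A k"

definition mat_exp :: "complex^'n^'n \<Rightarrow> complex^'n^'n" where
  "mat_exp A = (\<chi> i j. \<Sum>k. (cmat_pow A k) $ i $ j / of_nat (fact k))"

definition evol :: "real^'n^'n \<Rightarrow> real \<Rightarrow> complex^'n^'n" where
  "evol H t = mat_exp (\<chi> i j. \<i> * complex_of_real t * complex_of_real (H $ i $ j))"

definition fidelity :: "real^'n^'n \<Rightarrow> 'n \<Rightarrow> 'n \<Rightarrow> real \<Rightarrow> real" where
  "fidelity H s r t = (cmod (evol H t $ s $ r))\<^sup>2"

definition real_eigenvalues :: "real^'n^'n \<Rightarrow> real set" where
  "real_eigenvalues H = {c. \<exists>v. v \<noteq> 0 \<and> H *v v = c *\<^sub>R v}"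

end

theory Submission
  imports Defs
begin


lemma rayleigh_stationary:
  fixes A :: "real^'n^'n" and S :: "(real^'n) set"
  assumes sym: "\<And>x y. (A *v x) \<bullet> y = x \<bullet> (A *v y)"
    and S: "subspace S" and v: "v \<in> S" "norm v = 1"
    and mx: "\<And>x. x \<in> S \<Longrightarrow> norm x = 1 \<Longrightarrow> x \<bullet> (A *v x) \<le> v \<bullet> (A *v v)"
    and u: "u \<in> S" "u \<bullet> v = 0"
  shows "u \<bullet> (A *v v) = 0"
proof -
  define l where "l = v \<bullet> (A *v v)"
  define b where "b = u \<bullet> (A *v v)"
  define c where "c = u \<bullet> (A *v u) - l * (u \<bullet> u)"
  have vv: "v \<bullet> v = 1" using v by (simp add: norm_eq_1)
  have key: "2 * e * b + e^2 * c \<le> 0" for e :: real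
  proof -
    define x where "x = v + e *\<^sub>R u"
    have xS: "x \<in> S" using S v u unfolding x_def by (simp add: subspace_add subspace_scale)
    have xx: "x \<bullet> x = 1 + e^2 * (u \<bullet> u)"
      unfolding x_def using vv u(2) by (simp add: inner_add inner_commute power2_eq_square)
    have xpos: "x \<bullet> x > 0" using xx by (smt (verit) inner_ge_zero mult_nonneg_nonneg zero_le_power2)
    have nx: "norm x > 0" using xpos by (simp add: inner_gt_zero_iff)
    define y where "y = (1 / norm x) *\<^sub>R x"
    have "norm y = 1" unfolding y_def using nx by simp
    moreover have "y \<in> S" unfolding y_def using S xS by (simp add: subspace_scale)
    ultimately have "y \<bullet> (A *v y) \<le> l" using mx unfolding l_def by blast
    moreover have "y \<bullet> (A *v y) = (x \<bullet> (A *v x)) / (x \<bullet> x)"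
      unfolding y_def by (simp add: matrix_vector_mult_scaleR power2_norm_eq_inner[symmetric] power2_eq_square)
    ultimately have "x \<bullet> (A *v x) \<le> l * (x \<bullet> x)" using xpos by (simp add: divide_le_eq)
    moreover have "x \<bullet> (A *v x) = l + 2 * e * b + e^2 * (u \<bullet> (A *v u))"
    proof -
      have "x \<bullet> (A *v x) = v \<bullet> (A *v v) + e * (v \<bullet> (A *v u)) + e * (u \<bullet> (A *v v)) + e * e * (u \<bullet> (A *v u))"
        unfolding x_def by (simp add: matrix_vector_right_distrib matrix_vector_mult_scaleR inner_add algebra_simps)
      moreover have "v \<bullet> (A *v u) = u \<bullet> (A *v v)" using sym[of v u] by (simp add: inner_commute)
      ultimately show ?thesis unfolding l_def b_def by (simp add: power2_eq_square algebra_simps)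
    qed
    ultimately show ?thesis unfolding c_def xx by (simp add: algebra_simps)
  qed
  define e where "e = b / (\<bar>c\<bar> + 1)"
  have "2 * e * b + e^2 * c \<le> 0" by (rule key)
  hence "(2 * e * b + e^2 * c) * (\<bar>c\<bar> + 1)^2 \<le> 0"
    by (simp add: mult_nonpos_nonneg)
  moreover have "(2 * e * b + e^2 * c) * (\<bar>c\<bar> + 1)^2 = b^2 * (2 * (\<bar>c\<bar> + 1) + c)"
  proof -
    have k: "\<bar>c\<bar> + 1 \<noteq> 0" by linarith
    show ?thesis unfolding e_def using k by (simp add: power2_eq_square divide_simps) (simp add: algebra_simps)
  qed
  ultimately have "b^2 * (2 * (\<bar>c\<bar> + 1) + c) \<le> 0" by simp
  moreover have "2 * (\<bar>c\<bar> + 1) + c > 0" by (simp add: abs_if)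
  ultimately have "b^2 \<le> 0" by (simp add: mult_le_0_iff)
  thus ?thesis unfolding b_def by simp
qed

lemma spectral_subspace:
  fixes A :: "real^'n^'n"
  assumes sym: "\<And>x y. (A *v x) \<bullet> y = x \<bullet> (A *v y)"
  shows "subspace S \<Longrightarrow> (\<And>x. x \<in> S \<Longrightarrow> A *v x \<in> S) \<Longrightarrow>
     \<exists>B. B \<subseteq> S \<and> pairwise orthogonal B \<and> (\<forall>b\<in>B. norm b = 1) \<and> span B = S \<and>
         (\<forall>b\<in>B. A *v b = (b \<bullet> (A *v b)) *\<^sub>R b)"
proof (induction "dim S" arbitrary: S rule: less_induct)
  case less
  show ?case
  proof (cases "S = {0}")
    case True
    thus ?thesis by (intro exI[of _ "{}"]) auto
  next
    case False
    then obtain x0 where x0: "x0 \<in> S" "x0 \<noteq> 0" using less.prems(1) subspace_0 by blast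
    define K where "K = S \<inter> sphere 0 1"
    have "closed S" using less.prems(1) by (simp add: closed_subspace)
    hence cK: "compact K" unfolding K_def by (simp add: compact_Int_closed closed_Int_compact)
    have "(1 / norm x0) *\<^sub>R x0 \<in> K" unfolding K_def using x0 less.prems(1)
      by (simp add: subspace_scale)
    hence neK: "K \<noteq> {}" by blast
    have cf: "continuous_on K (\<lambda>x. x \<bullet> (A *v x))"
      by (intro continuous_intros continuous_on_id linear_continuous_on bounded_linear_intros) (simp add: matrix_vector_mul_linear_gen linear_linear)
    obtain v where vK: "v \<in> K" and vmax: "\<And>x. x \<in> K \<Longrightarrow> x \<bullet> (A *v x) \<le> v \<bullet> (A *v v)"
      using continuous_attains_sup[OF cK neK cf] by blast
    have vS: "v \<in> S" and nv: "norm v = 1" using vK unfolding K_def by auto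
    have vv: "v \<bullet> v = 1" using nv by (simp add: norm_eq_1)
    define l where "l = v \<bullet> (A *v v)"
    have stat: "u \<bullet> (A *v v) = 0" if "u \<in> S" "u \<bullet> v = 0" for u
      by (rule rayleigh_stationary[OF sym less.prems(1) vS nv _ that]) (use vmax K_def in auto)
    have ev: "A *v v = l *\<^sub>R v"
    proof -
      define z where "z = A *v v - l *\<^sub>R v"
      have zS: "z \<in> S" unfolding z_def using less.prems vS by (simp add: subspace_diff subspace_scale)
      have "z \<bullet> z = 0"
      proof -
        define u where "u = z - (z \<bullet> v) *\<^sub>R v"
        have uS: "u \<in> S" unfolding u_def using less.prems vS zS by (simp add: subspace_diff subspace_scale)
        have uv: "u \<bullet> v = 0" unfolding u_def using vv by (simp add: inner_diff_left)
        have zv: "z \<bullet> v = 0"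
        proof -
          have "z \<bullet> v = (A *v v) \<bullet> v - l * (v \<bullet> v)" unfolding z_def by (simp add: inner_diff_left)
          also have "(A *v v) \<bullet> v = l" unfolding l_def by (rule inner_commute)
          finally show ?thesis using vv by simp
        qed
        have "z \<bullet> z = u \<bullet> (A *v v) - l * (u \<bullet> v)"
          unfolding u_def using zv unfolding z_def by (simp add: inner_diff_right inner_diff_left inner_commute)
        thus ?thesis using stat[OF uS uv] uv by simp
      qed
      thus ?thesis unfolding z_def by simp
    qed
    define S' where "S' = {x \<in> S. x \<bullet> v = 0}"
    have sS': "subspace S'" unfolding S'_def using less.prems(1)
      by (auto simp: subspace_def inner_add_left)
    have iS': "A *v x \<in> S'" if "x \<in> S'" for x
    proof -
      have "(A *v x) \<bullet> v = x \<bullet> (A *v v)" by (rule sym)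
      also have "\<dots> = 0" using that ev unfolding S'_def by simp
      finally show ?thesis using that less.prems(2) unfolding S'_def by auto
    qed
    have "S' \<subset> S"
    proof -
      have "v \<notin> S'" using vv unfolding S'_def by auto
      thus ?thesis using vS unfolding S'_def by blast
    qed
    hence "span S' \<subset> span S" using sS' less.prems(1)
      by (metis span_eq_iff)
    hence "dim S' < dim S" by (rule dim_psubset)
    then obtain B' where B': "B' \<subseteq> S'" "pairwise orthogonal B'" "\<forall>b\<in>B'. norm b = 1" "span B' = S'"
        "\<forall>b\<in>B'. A *v b = (b \<bullet> (A *v b)) *\<^sub>R b"
      using less.hyps[OF _ sS' iS'] by blast
    have vB': "v \<notin> B'" using B'(1) vv unfolding S'_def by auto
    show ?thesis
    proof (intro exI[of _ "insert v B'"] conjI)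
      show "insert v B' \<subseteq> S" using B'(1) vS unfolding S'_def by auto
      show "pairwise orthogonal (insert v B')"
        using B'(1,2) unfolding S'_def
        by (auto simp: pairwise_insert orthogonal_def inner_commute)
      show "\<forall>b\<in>insert v B'. norm b = 1" using B'(3) nv by auto
      show "\<forall>b\<in>insert v B'. A *v b = (b \<bullet> (A *v b)) *\<^sub>R b"
        using B'(5) ev vv unfolding l_def by auto
      show "span (insert v B') = S"
      proof
        show "span (insert v B') \<subseteq> S"
          using B'(1) vS less.prems(1) unfolding S'_def by (intro span_minimal) auto
        show "S \<subseteq> span (insert v B')"
        proof
          fix x assume xS: "x \<in> S"
          have "x - (x \<bullet> v) *\<^sub>R v \<in> S'" unfolding S'_def using xS vS vv less.prems(1)
            by (simp add: subspace_diff subspace_scale inner_diff_left)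
          hence "x - (x \<bullet> v) *\<^sub>R v \<in> span (insert v B')" using B'(4) by (metis span_mono subset_insertI subsetD)
          moreover have "(x \<bullet> v) *\<^sub>R v \<in> span (insert v B')" by (simp add: span_base span_scale)
          ultimately have "(x - (x \<bullet> v) *\<^sub>R v) + (x \<bullet> v) *\<^sub>R v \<in> span (insert v B')" by (rule span_add)
          thus "x \<in> span (insert v B')" by simp
        qed
      qed
    qed
  qed
qed



context
  fixes B :: "(real^'n::finite) set" and d :: "real^'n \<Rightarrow> real"
  assumes finB: "finite B"
    and orth: "\<And>b c. b \<in> B \<Longrightarrow> c \<in> B \<Longrightarrow> b \<bullet> c = (if b = c then 1 else 0)"
    and F1: "\<And>i j. (\<Sum>b\<in>B. b$i * b$j) = (if i = j then 1 else 0)"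
begin

definition PP :: "(real^'n \<Rightarrow> complex) \<Rightarrow> complex^'n^'n" where
  "PP g = (\<chi> i j. \<Sum>b\<in>B. g b * of_real (b$i * b$j))"

lemma PP_mult: "PP f ** PP g = PP (\<lambda>b. f b * g b)"
proof -
  have "(PP f ** PP g) $ i $ j = PP (\<lambda>b. f b * g b) $ i $ j" for i j
  proof -
    have "(PP f ** PP g) $ i $ j = (\<Sum>l\<in>UNIV. (\<Sum>b\<in>B. f b * of_real (b$i * b$l)) * (\<Sum>c\<in>B. g c * of_real (c$l * c$j)))"
      by (simp add: matrix_matrix_mult_def PP_def)
    also have "\<dots> = (\<Sum>l\<in>UNIV. \<Sum>b\<in>B. \<Sum>c\<in>B. f b * g c * of_real (b$i * c$j) * of_real (b$l * c$l))"
      by (simp add: sum_product algebra_simps)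
    also have "\<dots> = (\<Sum>b\<in>B. \<Sum>c\<in>B. \<Sum>l\<in>UNIV. f b * g c * of_real (b$i * c$j) * of_real (b$l * c$l))"
      by (subst sum.swap) (simp add: sum.swap[of _ UNIV])
    also have "\<dots> = (\<Sum>b\<in>B. \<Sum>c\<in>B. f b * g c * of_real (b$i * c$j) * of_real (b \<bullet> c))"
      by (simp add: inner_vec_def sum_distrib_left)
    also have "\<dots> = (\<Sum>b\<in>B. \<Sum>c\<in>B. if c = b then f b * g c * of_real (b$i * c$j) else 0)"
      by (intro sum.cong refl) (simp add: orth)
    also have "\<dots> = (\<Sum>b\<in>B. f b * g b * of_real (b$i * b$j))"
      using finB by simp
    finally show ?thesis by (simp add: PP_def)
  qed
  thus ?thesis by (simp add: vec_eq_iff)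
qed

lemma PP_one: "PP (\<lambda>b. 1) = mat 1"
proof -
  have "PP (\<lambda>b. 1) $ i $ j = mat 1 $ i $ j" for i j
  proof -
    have "PP (\<lambda>b. 1) $ i $ j = of_real (\<Sum>b\<in>B. b$i * b$j)" by (simp add: PP_def)
    also have "\<dots> = mat 1 $ i $ j" by (simp add: F1 mat_def)
    finally show ?thesis .
  qed
  thus ?thesis by (simp add: vec_eq_iff)
qed

lemma PP_pow: "cmat_pow (PP g) k = PP (\<lambda>b. g b ^ k)"
  by (induction k) (simp_all add: PP_one PP_mult)

lemma exp_series_nat: "(\<lambda>k. x ^ k / of_nat (fact k)) sums (exp (x::complex))"
proof -
  have "(\<lambda>k. x ^ k /\<^sub>R fact k) sums exp x" by (rule exp_converges)
  moreover have "x ^ k /\<^sub>R fact k = x ^ k / of_nat (fact k)" for k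
    by (simp add: scaleR_conv_of_real divide_inverse_commute)
  ultimately show ?thesis by simp
qed

lemma PP_exp: "mat_exp (PP g) = PP (\<lambda>b. exp (g b))"
proof -
  have "mat_exp (PP g) $ i $ j = PP (\<lambda>b. exp (g b)) $ i $ j" for i j
  proof -
    have s: "(\<lambda>k. g b ^ k * of_real (b$i * b$j) / of_nat (fact k)) sums (exp (g b) * of_real (b$i * b$j))" for b
      using sums_mult2[OF exp_series_nat[of "g b"], of "of_real (b$i * b$j)"]
      by (simp add: times_divide_eq_left)
    have "mat_exp (PP g) $ i $ j = (\<Sum>k. (\<Sum>b\<in>B. g b ^ k * of_real (b$i * b$j)) / of_nat (fact k))"
      unfolding mat_exp_def PP_pow by (simp add: PP_def)
    also have "\<dots> = (\<Sum>k. \<Sum>b\<in>B. g b ^ k * of_real (b$i * b$j) / of_nat (fact k))"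
      by (simp only: sum_divide_distrib)
    also have "\<dots> = (\<Sum>b\<in>B. \<Sum>k. g b ^ k * of_real (b$i * b$j) / of_nat (fact k))"
      by (rule suminf_sum) (use s sums_summable in blast)
    also have "\<dots> = (\<Sum>b\<in>B. exp (g b) * of_real (b$i * b$j))"
      using s sums_unique by (metis (no_types, lifting))
    finally show ?thesis by (simp add: PP_def)
  qed
  thus ?thesis by (simp add: vec_eq_iff)
qed

lemma evol_formula:
  assumes F2: "\<And>i j. H$i$j = (\<Sum>b\<in>B. d b * (b$i * b$j))"
  shows "evol H t $ i $ j = (\<Sum>b\<in>B. cis (t * d b) * of_real (b$i * b$j))"
proof -
  have "(\<chi> i j. \<i> * complex_of_real t * complex_of_real (H $ i $ j)) = PP (\<lambda>b. \<i> * of_real t * of_real (d b))"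
    by (simp add: PP_def vec_eq_iff F2 sum_distrib_left algebra_simps)
  hence "evol H t = PP (\<lambda>b. exp (\<i> * of_real t * of_real (d b)))"
    unfolding evol_def by (simp add: PP_exp)
  also have "\<dots> = PP (\<lambda>b. cis (t * d b))"
    by (simp add: cis_conv_exp mult.assoc)
  finally show ?thesis by (simp add: PP_def)
qed

end


lemma cmod_cis_sum_sq: "(cmod (cis a + cis b))^2 = 2 + 2 * cos (a - b)"
proof -
  have "(cmod (cis a + cis b))^2 = (cos a + cos b)^2 + (sin a + sin b)^2" by (simp add: cmod_power2)
  also have "\<dots> = ((sin a)^2 + (cos a)^2) + ((sin b)^2 + (cos b)^2) + 2 * (cos a * cos b + sin a * sin b)"
    by algebra
  also have "\<dots> = 2 + 2 * cos (a - b)" unfolding sin_cos_squared_add cos_diff by simp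
  finally show ?thesis .
qed

lemma geom:
  fixes B :: "'b set" and q e :: "'b \<Rightarrow> real"
  assumes finB: "finite B" and q0: "\<And>b. b \<in> B \<Longrightarrow> q b \<ge> 0" and q1: "(\<Sum>b\<in>B. q b) = 1"
    and rng: "\<And>b. b \<in> B \<Longrightarrow> m \<le> e b \<and> e b \<le> M"
    and hb: "(M - m) * \<bar>h\<bar> < pi"
  shows "1/4 * (cmod (exp (\<i> * complex_of_real (h * m)) + exp (\<i> * complex_of_real (h * M))))\<^sup>2
         \<le> (cmod (\<Sum>b\<in>B. complex_of_real (q b) * cis (h * e b)))\<^sup>2"
proof -
  have "B \<noteq> {}" using q1 by auto
  then obtain b0 where "b0 \<in> B" by blast
  hence mM: "m \<le> M" using rng by force
  define \<delta> where "\<delta> = (M - m) / 2"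
  define c where "c = (m + M) / 2"
  define \<alpha> where "\<alpha> = \<bar>h\<bar> * \<delta>"
  have a0: "0 \<le> \<alpha>" unfolding \<alpha>_def \<delta>_def using mM by simp
  have api2: "\<alpha> < pi / 2" unfolding \<alpha>_def \<delta>_def using hb by (simp add: algebra_simps)
  have api: "\<alpha> \<le> pi" using api2 pi_gt_zero by linarith
  have cosa: "cos \<alpha> \<ge> 0" using a0 api2 by (intro cos_ge_zero) auto
  define z where "z = (\<Sum>b\<in>B. complex_of_real (q b) * cis (h * e b))"
  have cb: "cos (h * e b - h * c) \<ge> cos \<alpha>" if "b \<in> B" for b
  proof -
    have "\<bar>e b - c\<bar> \<le> \<delta>" using rng[OF that] unfolding c_def \<delta>_def by (simp only: abs_le_iff) (auto simp: field_simps)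
    hence "\<bar>h * e b - h * c\<bar> \<le> \<alpha>" unfolding \<alpha>_def
      by (simp add: right_diff_distrib[symmetric] abs_mult mult_left_mono)
    hence "cos \<alpha> \<le> cos \<bar>h * e b - h * c\<bar>"
      using api by (intro cos_monotone_0_pi_le) auto
    thus ?thesis by simp
  qed
  have "Re (z * cis (- (h * c))) = (\<Sum>b\<in>B. q b * cos (h * e b - h * c))"
    unfolding z_def by (simp add: sum_distrib_right Re_sum cis_mult cos_diff algebra_simps sum.distrib sum_distrib_left)
  also have "\<dots> \<ge> (\<Sum>b\<in>B. q b * cos \<alpha>)"
    by (intro sum_mono mult_left_mono cb q0)
  finally have "Re (z * cis (- (h * c))) \<ge> cos \<alpha>" using q1 by (simp add: sum_distrib_right[symmetric])
  moreover have "Re (z * cis (- (h * c))) \<le> cmod z"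
    using complex_Re_le_cmod[of "z * cis (- (h * c))"] by (simp add: norm_mult)
  ultimately have zc: "cmod z \<ge> cos \<alpha>" by simp
  have lhs: "1/4 * (cmod (exp (\<i> * complex_of_real (h * m)) + exp (\<i> * complex_of_real (h * M))))\<^sup>2 = (cos \<alpha>)^2"
  proof -
    have "1/4 * (cmod (exp (\<i> * complex_of_real (h * m)) + exp (\<i> * complex_of_real (h * M))))\<^sup>2
       = 1/4 * (2 + 2 * cos (h * m - h * M))"
      unfolding cis_conv_exp[symmetric] cmod_cis_sum_sq ..
    also have "cos (h * m - h * M) = cos (2 * \<alpha>)"
    proof -
      have "h * m - h * M = - (2 * (h * \<delta>))" unfolding \<delta>_def by (simp add: field_simps)
      moreover have "cos (2 * (h * \<delta>)) = cos (2 * \<alpha>)" unfolding \<alpha>_def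
        by (cases "h \<ge> 0") (simp_all add: abs_if)
      ultimately show ?thesis by simp
    qed
    also have "cos (2 * \<alpha>) = 2 * (cos \<alpha>)^2 - 1" by (rule cos_double_cos)
    finally show ?thesis by simp
  qed
  show ?thesis unfolding lhs z_def[symmetric]
    using zc cosa by (intro power_mono) auto
qed



lemma sym_inner:
  fixes H :: "real^'n::finite^'n"
  assumes hs: "\<And>i j. H$i$j = H$j$i"
  shows "(H *v x) \<bullet> y = x \<bullet> (H *v y)"
proof -
  have "transpose H = H" using hs by (simp add: transpose_def vec_eq_iff)
  have "(H *v x) \<bullet> y = y \<bullet> (H *v x)" by (rule inner_commute)
  also have "\<dots> = (y v* H) \<bullet> x" by (simp add: dot_lmul_matrix)
  also have "y v* H = transpose H *v y" by simp
  also have "\<dots> = H *v y" using \<open>transpose H = H\<close> by simp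
  finally show ?thesis by (simp add: inner_commute)
qed

lemma sym_H:
  fixes E :: "'n::finite \<Rightarrow> 'n \<Rightarrow> bool"
  assumes E_sym: "\<And>j k. E j k \<Longrightarrow> E k j" and w_sym: "\<And>j k. w j k = w k j"
    and H_def: "H = adj_mat E w \<or> H = lap_mat E w"
  shows "H$i$j = H$j$i"
proof -
  have a: "adj_mat E w $ i $ j = adj_mat E w $ j $ i" for i j
    using E_sym w_sym by (auto simp: adj_mat_def)
  show ?thesis using H_def
  proof
    assume "H = adj_mat E w" thus ?thesis using a by simp
  next
    assume "H = lap_mat E w" thus ?thesis using a by (simp add: lap_mat_def)
  qed
qed

lemma main_sym:
  fixes H :: "real^'n::finite^'n" and s r :: 'n and t0 h :: real
  assumes hs: "\<And>i j. H$i$j = H$j$i"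
    and PST: "fidelity H s r t0 = 1"
    and h_bound: "(Max (real_eigenvalues H) - Min (real_eigenvalues H)) * \<bar>h\<bar> < pi"
  shows "fidelity H s r (t0 + h) \<ge>
           1/4 * (cmod (exp (\<i> * complex_of_real (h * Min (real_eigenvalues H)))
                      + exp (\<i> * complex_of_real (h * Max (real_eigenvalues H)))))\<^sup>2"
proof -
  have sym: "\<And>x y. (H *v x) \<bullet> y = x \<bullet> (H *v y)" using sym_inner[OF hs] .
  obtain B where B: "pairwise orthogonal B" "\<forall>b\<in>B. norm b = 1" "span B = UNIV"
      "\<forall>b\<in>B. H *v b = (b \<bullet> (H *v b)) *\<^sub>R b"
    using spectral_subspace[OF sym, of UNIV] by auto
  define d where "d b = b \<bullet> (H *v b)" for b
  have finB: "finite B" using B(1) by (rule pairwise_orthogonal_imp_finite)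
  have orth: "b \<bullet> c = (if b = c then 1 else 0)" if "b \<in> B" "c \<in> B" for b c
    using B(1,2) that by (auto simp: pairwise_def orthogonal_def norm_eq_1)
  have expand: "x = (\<Sum>b\<in>B. (x \<bullet> b) *\<^sub>R b)" for x
    using orthonormal_basis_expand[OF B(1)] B(2,3) finB by simp
  have F1: "(\<Sum>b\<in>B. b$i * b$j) = (if i = j then 1 else 0)" for i j
  proof -
    have "axis j 1 $ i = (\<Sum>b\<in>B. (axis j 1 \<bullet> b) *\<^sub>R b) $ i" using expand[of "axis j (1::real)"] by simp
    also have "\<dots> = (\<Sum>b\<in>B. b$j * b$i)" by (simp add: inner_axis' sum_component)
    finally show ?thesis by (simp add: axis_def mult.commute eq_commute[of j i])
  qed
  have ev: "H *v b = d b *\<^sub>R b" if "b \<in> B" for b using B(4) that unfolding d_def by blast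
  have F2: "H$i$j = (\<Sum>b\<in>B. d b * (b$i * b$j))" for i j
  proof -
    have "(\<Sum>l\<in>UNIV. H$i$l * (if l = j then 1 else 0)) = (\<Sum>l\<in>UNIV. if l = j then H$i$l else 0)"
      by (intro sum.cong) auto
    hence "H$i$j = (\<Sum>l\<in>UNIV. H$i$l * (if l = j then 1 else 0))" by simp
    also have "\<dots> = (\<Sum>l\<in>UNIV. H$i$l * (\<Sum>b\<in>B. b$l * b$j))" by (simp add: F1)
    also have "\<dots> = (\<Sum>b\<in>B. (\<Sum>l\<in>UNIV. H$i$l * b$l) * b$j)"
      by (simp add: sum_distrib_left sum_distrib_right algebra_simps) (rule sum.swap)
    also have "\<dots> = (\<Sum>b\<in>B. (H *v b)$i * b$j)" by (simp add: matrix_vector_mult_def)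
    also have "\<dots> = (\<Sum>b\<in>B. d b * (b$i * b$j))" by (intro sum.cong refl) (simp add: ev)
    finally show ?thesis .
  qed
  have evol: "evol H t $ i $ j = (\<Sum>b\<in>B. cis (t * d b) * of_real (b$i * b$j))" for t i j
    using evol_formula[OF finB orth F1 F2] by blast
  have Bne: "B \<noteq> {}"
  proof
    assume "B = {}"
    hence "axis s (1::real) \<in> span {}" using B(3) by auto
    thus False by (simp add: axis_eq_0_iff)
  qed
  have dev: "d b \<in> real_eigenvalues H" if "b \<in> B" for b
    unfolding real_eigenvalues_def using ev[OF that] B(2) that by (intro CollectI exI[of _ b]) auto
  have evsub: "real_eigenvalues H \<subseteq> d ` B"
  proof
    fix c assume "c \<in> real_eigenvalues H"
    then obtain v where v: "v \<noteq> 0" "H *v v = c *\<^sub>R v" unfolding real_eigenvalues_def by blast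
    have "\<exists>b\<in>B. v \<bullet> b \<noteq> 0"
    proof (rule ccontr)
      assume "\<not> ?thesis"
      hence "v = 0" using expand[of v] by simp
      thus False using v(1) by simp
    qed
    then obtain b where b: "b \<in> B" "v \<bullet> b \<noteq> 0" by blast
    have "c * (v \<bullet> b) = (H *v v) \<bullet> b" using v(2) by simp
    also have "\<dots> = v \<bullet> (H *v b)" by (rule sym)
    also have "\<dots> = d b * (v \<bullet> b)" using ev[OF b(1)] by simp
    finally have "c = d b" using b(2) by simp
    thus "c \<in> d ` B" using b(1) by blast
  qed
  have finE: "finite (real_eigenvalues H)" using evsub finB finite_subset by blast
  define mn where "mn = Min (real_eigenvalues H)"
  define mx where "mx = Max (real_eigenvalues H)"
  have rng: "mn \<le> d b \<and> d b \<le> mx" if "b \<in> B" for b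
    using dev[OF that] finE unfolding mn_def mx_def by auto
  define u where "u (b::real^'n) = b$s" for b
  define v where "v (b::real^'n) = of_real (b$r) * cis (t0 * d b)" for b
  define \<gamma> where "\<gamma> = (\<Sum>b\<in>B. of_real (u b) * v b)"
  have \<gamma>_def': "\<gamma> = evol H t0 $ s $ r" unfolding evol \<gamma>_def u_def v_def
    by (intro sum.cong refl) (simp add: mult_ac)
  have "(cmod \<gamma>)^2 = 1" using PST unfolding fidelity_def \<gamma>_def' .
  hence g1: "cmod \<gamma> = 1" using power2_eq_1_iff[of "cmod \<gamma>"] norm_ge_zero[of \<gamma>] by auto
  have uu: "(\<Sum>b\<in>B. u b * u b) = 1" unfolding u_def using F1[of s s] by simp
  have vb: "v b = \<gamma> * of_real (u b)" if "b \<in> B" for b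
  proof -
    define w where "w b = v b - \<gamma> * of_real (u b)" for b
    have vv: "(\<Sum>b\<in>B. v b * cnj (v b)) = 1"
    proof -
      have cc: "cis x * cnj (cis x) = 1" for x using complex_norm_square[of "cis x"] by simp
      have "v b * cnj (v b) = of_real (b$r * b$r) * (cis (t0 * d b) * cnj (cis (t0 * d b)))" for b
        by (simp add: v_def mult_ac)
      hence "(\<Sum>b\<in>B. v b * cnj (v b)) = (\<Sum>b\<in>B. of_real (b$r * b$r))" by (simp add: cc)
      also have "\<dots> = of_real (\<Sum>b\<in>B. b$r * b$r)" by (rule of_real_sum[symmetric])
      finally have "(\<Sum>b\<in>B. v b * cnj (v b)) = of_real (\<Sum>b\<in>B. b$r * b$r)" .
      thus ?thesis using F1[of r r] by simp
    qed
    have uv: "(\<Sum>b\<in>B. of_real (u b) * cnj (v b)) = cnj \<gamma>" unfolding \<gamma>_def by (simp add: cnj_sum)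
    have gg: "\<gamma> * cnj \<gamma> = 1" using g1 complex_norm_square[of \<gamma>] by simp
    have "(\<Sum>b\<in>B. w b * cnj (w b)) = (\<Sum>b\<in>B. v b * cnj (v b) - cnj \<gamma> * (of_real (u b) * v b)
          - \<gamma> * (of_real (u b) * cnj (v b)) + \<gamma> * cnj \<gamma> * of_real (u b * u b))"
      unfolding w_def by (intro sum.cong refl) (simp add: algebra_simps)
    also have "\<dots> = (\<Sum>b\<in>B. v b * cnj (v b)) - cnj \<gamma> * (\<Sum>b\<in>B. of_real (u b) * v b)
          - \<gamma> * (\<Sum>b\<in>B. of_real (u b) * cnj (v b)) + \<gamma> * cnj \<gamma> * of_real (\<Sum>b\<in>B. u b * u b)"
      by (simp add: sum.distrib sum_subtractf sum_distrib_left)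
    also have "\<dots> = 0" unfolding vv uv uu \<gamma>_def[symmetric] using gg by (simp add: algebra_simps)
    finally have "(\<Sum>b\<in>B. w b * cnj (w b)) = 0" .
    hence "of_real (\<Sum>b\<in>B. (cmod (w b))^2) = (0::complex)"
      by (simp only: of_real_sum complex_norm_square)
    hence "(\<Sum>b\<in>B. (cmod (w b))^2) = 0" by (simp only: of_real_eq_0_iff)
    hence "(cmod (w b))^2 = 0" using sum_nonneg_eq_0_iff[OF finB, of "\<lambda>b. (cmod (w b))^2"] that by simp
    thus ?thesis unfolding w_def by simp
  qed
  have "evol H (t0 + h) $ s $ r = \<gamma> * (\<Sum>b\<in>B. of_real (u b * u b) * cis (h * d b))"
  proof -
    have "evol H (t0 + h) $ s $ r = (\<Sum>b\<in>B. of_real (u b) * v b * cis (h * d b))"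
    proof -
      have ch: "cis ((t0 + h) * x) = cis (t0 * x) * cis (h * x)" for x by (simp add: cis_mult distrib_right)
      have ch': "cis (x * (t0 + h)) = cis (h * x) * cis (t0 * x)" for x by (simp add: cis_mult algebra_simps)
      show ?thesis unfolding evol u_def v_def by (intro sum.cong refl) (simp add: ch' mult_ac)
    qed
    also have "\<dots> = (\<Sum>b\<in>B. \<gamma> * (of_real (u b * u b) * cis (h * d b)))"
      by (intro sum.cong refl) (simp add: vb algebra_simps)
    finally show ?thesis by (simp add: sum_distrib_left)
  qed
  hence fid: "fidelity H s r (t0 + h) = (cmod (\<Sum>b\<in>B. of_real (u b * u b) * cis (h * d b)))^2"
    unfolding fidelity_def using g1 by (simp add: norm_mult)
  show ?thesis unfolding fid mn_def[symmetric] mx_def[symmetric]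
    by (rule geom[OF finB _ _ rng]) (use uu h_bound in \<open>auto simp: mn_def mx_def\<close>)
qed


theorem theorem2p1:
  fixes E :: "'n::finite \<Rightarrow> 'n \<Rightarrow> bool" and w :: "'n \<Rightarrow> 'n \<Rightarrow> real"
    and H :: "real^'n^'n" and s r :: 'n and t0 h :: real
  assumes E_sym: "\<And>j k. E j k \<Longrightarrow> E k j"
    and E_irrefl: "\<And>j. \<not> E j j"
    and w_sym: "\<And>j k. w j k = w k j"
    and connected: "\<And>j k. E\<^sup>*\<^sup>* j k"
    and H_def: "H = adj_mat E w \<or> H = lap_mat E w"
    and PST: "fidelity H s r t0 = 1"
    and h_bound: "(Max (real_eigenvalues H) - Min (real_eigenvalues H)) * \<bar>h\<bar> < pi"
  shows "fidelity H s r (t0 + h) \<ge>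
           1/4 * (cmod (exp (\<i> * complex_of_real (h * Min (real_eigenvalues H)))
                      + exp (\<i> * complex_of_real (h * Max (real_eigenvalues H)))))\<^sup>2"
  by (rule main_sym[OF sym_H[OF E_sym w_sym H_def] PST h_bound])

end
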